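(* Let $G$ be a finite abelian group of even order, $S$ a symmetric generating set, and $s\in S$ such that $|G'|\ge4$ is even. (1) If $(s,t,s^{-1},t^{-1})\in\mathcal H$ for every $t\in S'$, then $\mathcal H'\subseteq\mathcal H$. (2) If $2(s,t,s^{-1},t^{-1})\in\mathcal H$ for every $t\in S'$, then $2\mathcal H'\subseteq\mathcal H$.
   Context: $X=\mathrm{Cay}(G;S)$ has vertex set $G$ and edges $\{g,gs\}$. For the chosen $s$: $S'=S\setminus\{s,s^{-1}\}$, $G'=\langle S'\rangle$, $X'=\mathrm{Cay}(G';S')$. A flow is $f:G\times S\to\mathbb Z$ with $f(v,a)=-f(va,a^{-1})$ and $\sum_af(v,a)=0$; closed walks $(t_1,\dots,t_n)$ (visiting $e,t_1,t_1t_2,\dots$) are identified with flows ($+1$ on traversed oriented edges, $-1$ on reversals). $\mathcal H$ is the subgroup of flows on $X$ generated by oriented hamiltonian cycles of $X$; $\mathcal H'$ is the subgroup of flows on $X'$ generated by oriented hamiltonian cycles of $X'$, regarded as flows on $X$ by extending by $0$. *)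

theory Defs
  imports Main "HOL-Library.Function_Algebras" "HOL-Computational_Algebra.Group_Closure"
begin

text \<open>Groups are written additively: a finite abelian group is a type of class
  ab_group_add and finite; the identity e is 0, g s is g + s, s^-1 is - s.
  A flow is a function f :: 'a => 'a => int with f v a the value on the oriented
  edge (v, v + a) labelled by the generator a; outside the relevant G x S it is 0.\<close>

fun walk_flow_from :: "'a::ab_group_add \<Rightarrow> 'a list \<Rightarrow> ('a \<Rightarrow> 'a \<Rightarrow> int)" where
  "walk_flow_from v [] = (\<lambda>x a. 0)"
| "walk_flow_from v (t # ts) =
     (\<lambda>x a. (if x = v \<and> a = t then 1 else 0) - (if x = v + t \<and> a = - t then 1 else 0)
            + walk_flow_from (v + t) ts x a)"

definition walk_flow :: "'a::ab_group_add list \<Rightarrow> ('a \<Rightarrow> 'a \<Rightarrow> int)" where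
  "walk_flow ts = walk_flow_from 0 ts"

text \<open>Vertices visited: e, t_1, t_1 t_2, ..., (first n, excluding the return to e).\<close>
definition walk_vertices :: "'a::ab_group_add list \<Rightarrow> 'a list" where
  "walk_vertices ts = map (\<lambda>i. sum_list (take i ts)) [0..<length ts]"

definition ham_cycle :: "'a::ab_group_add set \<Rightarrow> 'a set \<Rightarrow> 'a list \<Rightarrow> bool" where
  "ham_cycle V T ts \<longleftrightarrow> set ts \<subseteq> T \<and> sum_list ts = 0 \<and> length ts \<ge> 3 \<and>
     distinct (walk_vertices ts) \<and> set (walk_vertices ts) = V"

definition ham_flows :: "'a::ab_group_add set \<Rightarrow> 'a set \<Rightarrow> ('a \<Rightarrow> 'a \<Rightarrow> int) set" where
  "ham_flows V T = group_closure {walk_flow ts | ts. ham_cycle V T ts}"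

end

theory Submission
  imports Defs
begin


primrec nmul :: "nat \<Rightarrow> 'a::ab_group_add \<Rightarrow> 'a" where
  "nmul 0 a = 0" | "nmul (Suc n) a = a + nmul n a"

lemma nmul_add: "nmul (i+j) a = nmul i a + nmul j a"
  by (induct i) (simp_all add: add.assoc)
lemma nmul_neg: "nmul j (-a) = - nmul j a"
  by (induct j) (simp_all add: algebra_simps)
lemma sum_replicate: "sum_list (replicate r a) = nmul r a"
  by (induct r) simp_all
lemma nmul_diff: "j \<le> r \<Longrightarrow> nmul r a - nmul j a = nmul (r-j) a"
  using nmul_add[of "r-j" j a] by simp

fun vs :: "'a::ab_group_add \<Rightarrow> 'a list \<Rightarrow> 'a list" where
  "vs v [] = []" | "vs v (x#xs) = v # vs (v+x) xs"

lemma vs_append: "vs v (xs@ys) = vs v xs @ vs (v + sum_list xs) ys"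
  by (induct xs arbitrary: v) (simp_all add: add.assoc)
lemma vs_shift: "vs (c+v) xs = map ((+) c) (vs v xs)"
  by (induct xs arbitrary: v) (simp_all add: add.assoc)
lemma length_vs[simp]: "length (vs v xs) = length xs"
  by (induct xs arbitrary: v) simp_all
lemma vs_map: "vs v xs = map (\<lambda>i. v + sum_list (take i xs)) [0..<length xs]"
proof (induct xs arbitrary: v)
  case Nil then show ?case by simp
next
  case (Cons x xs)
  show ?case
    by (simp only: length_Cons map_upt_Suc) (simp add: Cons add.assoc)
qed
lemma walk_vertices_vs: "walk_vertices ts = vs 0 ts"
  by (simp add: walk_vertices_def vs_map)

abbreviation wff where "wff \<equiv> walk_flow_from"
definition ee :: "'a::ab_group_add \<Rightarrow> 'a \<Rightarrow> 'a \<Rightarrow> 'a \<Rightarrow> int" where "ee v t = wff v [t]"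

lemma wff_Cons: "wff v (t#ts) = ee v t + wff (v+t) ts"
  by (rule ext, rule ext) (simp add: ee_def)
lemma wff_Nil: "wff v [] = 0"
  by (rule ext, rule ext) simp
declare walk_flow_from.simps[simp del]
lemma wff_append: "wff v (xs@ys) = wff v xs + wff (v + sum_list xs) ys"
  by (induct xs arbitrary: v) (simp_all add: wff_Cons wff_Nil add.assoc)
lemma ee_rev: "ee (x + a) (-a) = - ee x a"
  by (rule ext, rule ext) (auto simp add: ee_def walk_flow_from.simps)

definition tr :: "'a::ab_group_add \<Rightarrow> ('a \<Rightarrow> 'a \<Rightarrow> int) \<Rightarrow> ('a \<Rightarrow> 'a \<Rightarrow> int)" where
  "tr g f = (\<lambda>x a. f (x - g) a)"
lemma tr_diff: "tr g (f - h) = tr g f - tr g h" by (rule ext, rule ext) (simp add: tr_def)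
lemma tr_add: "tr g (f + h) = tr g f + tr g h" by (rule ext, rule ext) (simp add: tr_def)
lemma tr_zero: "tr g 0 = 0" by (rule ext, rule ext) (simp add: tr_def)
lemma wff_shift: "wff (g + v) ts = tr g (wff v ts)"
proof (induct ts arbitrary: v)
  case Nil then show ?case by (simp add: fun_eq_iff walk_flow_from.simps tr_def)
next
  case (Cons t ts)
  have "ee (g+v) t = tr g (ee v t)"
    by (rule ext, rule ext) (auto simp add: tr_def ee_def walk_flow_from.simps algebra_simps)
  then show ?case using Cons[of "v+t"] by (simp add: wff_Cons fun_eq_iff tr_def add.assoc)
qed

lemma wff_rev: "wff (v + sum_list xs) (rev (map uminus xs)) = - wff v xs"
proof (induct xs arbitrary: v)
  case Nil then show ?case by (simp add: wff_Nil)
next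
  case (Cons x xs)
  have "wff (v + sum_list (x#xs)) (rev (map uminus (x#xs)))
     = wff ((v+x) + sum_list xs) (rev (map uminus xs)) + ee ((v+x) + sum_list xs + sum_list (rev (map uminus xs))) (-x)"
    by (simp add: wff_append wff_Cons wff_Nil add.assoc)
  also have "sum_list (rev (map uminus xs)) = - sum_list xs"
    by (induct xs) (simp_all add: sum_list_rev)
  finally show ?case using Cons[of "v+x"] ee_rev[of v x] by (simp add: wff_Cons fun_eq_iff)
qed

lemma ham_rot:
  fixes ts :: "'a::{ab_group_add,finite} list"
  assumes h: "ham_cycle UNIV S ts"
  shows "wff g ts \<in> ham_flows UNIV S"
proof -
  have d: "distinct (vs 0 ts)" and su: "set (vs 0 ts) = UNIV" and s0: "sum_list ts = 0"
    and st: "set ts \<subseteq> S" and l3: "length ts \<ge> 3"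
    using h by (auto simp: ham_cycle_def walk_vertices_vs)
  have "-g \<in> set (vs 0 ts)" using su by simp
  then obtain i where i: "i < length ts" "vs 0 ts ! i = -g"
    by (metis in_set_conv_nth length_vs)
  then have sti: "sum_list (take i ts) = -g" by (simp add: vs_map)
  have "sum_list (take i ts) + sum_list (drop i ts) = 0"
    using s0 by (metis append_take_drop_id sum_list_append)
  then have sdi: "sum_list (drop i ts) = g" using sti by (simp add: add_eq_0_iff)
  define ts' where "ts' = drop i ts @ take i ts"
  have fl: "walk_flow ts' = wff g ts"
  proof -
    have "walk_flow ts' = wff 0 (drop i ts) + wff g (take i ts)"
      by (simp add: walk_flow_def ts'_def wff_append sdi)
    moreover have "wff g ts = wff g (take i ts) + wff 0 (drop i ts)"
      by (metis append_take_drop_id wff_append sti add.right_inverse)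
    ultimately show ?thesis by (simp add: add.commute)
  qed
  have len: "length ts' = length ts" by (simp add: ts'_def)
  have sets: "set ts' = set ts"
    by (metis ts'_def append_take_drop_id set_append sup_commute)
  have sum': "sum_list ts' = 0" using \<open>sum_list (take i ts) + sum_list (drop i ts) = 0\<close>
    by (simp add: ts'_def add.commute)
  have "vs 0 ts' = vs 0 (drop i ts) @ vs g (take i ts)"
    by (simp add: ts'_def vs_append sdi)
  moreover have "vs 0 ts = vs 0 (take i ts) @ vs (-g) (drop i ts)"
    by (metis append_take_drop_id vs_append sti add_0)
  moreover have "vs 0 (drop i ts) = map ((+) g) (vs (-g) (drop i ts))"
    using vs_shift[of g "-g" "drop i ts"] by simp
  moreover have "vs g (take i ts) = map ((+) g) (vs 0 (take i ts))"
    using vs_shift[of g 0 "take i ts"] by simp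
  ultimately have "set (vs 0 ts') = (+) g ` set (vs 0 ts)" by auto
  then have su': "set (vs 0 ts') = UNIV" using su
    by (metis surj_plus)
  have "card (set (vs 0 ts')) = length (vs 0 ts')"
    using su' su d len by (metis distinct_card length_vs)
  then have "distinct (vs 0 ts')" by (rule card_distinct)
  then have "ham_cycle UNIV S ts'"
    using su' sum' sets st l3 len by (simp add: ham_cycle_def walk_vertices_vs)
  then show ?thesis using fl unfolding ham_flows_def
    by (metis (mono_tags, lifting) group_closure.base insertI2 mem_Collect_eq)
qed

lemma tr_H:
  fixes f :: "'a::{ab_group_add,finite} \<Rightarrow> 'a \<Rightarrow> int"
  assumes "f \<in> ham_flows UNIV S"
  shows "tr g f \<in> ham_flows UNIV S"
  using assms unfolding ham_flows_def
proof (induct rule: group_closure.induct)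
  case (base f)
  then show ?case
  proof
    assume f0: "f = 0" show ?thesis unfolding f0 tr_zero by (rule zero_in_group_closure)
  next
    assume "f \<in> {walk_flow ts |ts. ham_cycle UNIV S ts}"
    then obtain ts where "f = wff 0 ts" "ham_cycle UNIV S ts" by (auto simp: walk_flow_def)
    then show ?thesis using ham_rot[of S ts g] wff_shift[of g 0 ts] unfolding ham_flows_def by simp
  qed
next
  case (diff f h)
  then show ?case unfolding tr_diff by (blast intro: group_closure.diff)
qed




definition Qf :: "'a::ab_group_add \<Rightarrow> 'a \<Rightarrow> 'a \<Rightarrow> 'a \<Rightarrow> 'a \<Rightarrow> int" where
  "Qf s w t = wff w [s, t, -s, -t]"

lemma Qf_eq: "Qf s w t = ee w s + ee (w+s) t - ee (w+t) s - ee w t"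
proof -
  have 1: "ee (w+s+t) (-s) = - ee (w+t) s" using ee_rev[of "w+t" s] by (simp add: add_ac)
  have 2: "ee (w+s+t+-s) (-t) = - ee w t" using ee_rev[of w t] by (simp add: add_ac)
  show ?thesis unfolding Qf_def wff_Cons wff_Nil 1 2 by (simp add: fun_eq_iff)
qed

lemma col_Suc: "wff v (replicate (Suc r) s) = wff v (replicate r s) + ee (v + nmul r s) s"
proof -
  have "replicate (Suc r) s = replicate r s @ [s]" by (simp add: replicate_append_same)
  then show ?thesis by (simp add: wff_append wff_Cons wff_Nil sum_replicate del: replicate_Suc)
qed

lemma QQ: "(\<Sum>j<r. Qf s (v + nmul j s) t) = wff v (replicate r s) - wff (v+t) (replicate r s) + ee (v + nmul r s) t - ee v t"
proof (induct r)
  case 0 then show ?case by (simp add: wff_Nil fun_eq_iff)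
next
  case (Suc r)
  have e: "(\<Sum>j<Suc r. Qf s (v + nmul j s) t) = (wff v (replicate r s) - wff (v+t) (replicate r s) + ee (v + nmul r s) t - ee v t) + Qf s (v + nmul r s) t"
    unfolding sum.lessThan_Suc Suc by simp
  show ?case unfolding e unfolding col_Suc Qf_eq
    by (simp add: fun_eq_iff add_ac)
qed




lemma gc_sum: "finite A \<Longrightarrow> (\<And>x. x \<in> A \<Longrightarrow> f x \<in> group_closure B) \<Longrightarrow> sum f A \<in> group_closure B"
  by (induct A rule: finite_induct) (auto intro: group_closure_add)

lemma vs_rep: "vs b (replicate r a) = map (\<lambda>j. b + nmul j a) [0..<r]"
proof (induct r arbitrary: b)
  case 0 then show ?case by simp
next
  case (Suc r)
  show ?case by (simp only: replicate_Suc vs.simps map_upt_Suc Suc) (simp add: add_ac)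
qed

lemma vs_blk: "vs b (replicate r a @ [t]) = map (\<lambda>j. b + nmul j a) [0..<Suc r]"
  by (simp add: vs_append vs_rep sum_replicate)

lemma construction:
  fixes S :: "'a::{ab_group_add,finite} set" and s :: 'a and ts
  assumes gen: "group_closure S = UNIV" and sS: "s \<in> S" and msS: "-s \<in> S"
    and h: "ham_cycle (group_closure (S - {s,-s})) (S - {s,-s}) ts"
    and ev: "even (length ts)"
  shows "\<exists>Z. ham_cycle UNIV S Z \<and> walk_flow Z - walk_flow ts \<in> group_closure {Qf s w t | w t. t \<in> S - {s,-s}}"
proof -
  define S' where "S' = S - {s,-s}"
  define G' where "G' = group_closure S'"
  define m where "m = length ts"
  define v where "v i = sum_list (take i ts)" for i
  have d: "distinct (vs 0 ts)" and sv: "set (vs 0 ts) = G'" and st: "set ts \<subseteq> S'"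
    and s0: "sum_list ts = 0" and l3: "m \<ge> 3"
    using h by (auto simp: ham_cycle_def walk_vertices_vs S'_def G'_def m_def)
  have vnth: "vs 0 ts ! i = v i" if "i < m" for i
    using that by (simp add: vs_map v_def m_def)
  have vG: "v i \<in> G'" if "i < m" for i
    using that vnth sv by (metis length_vs m_def nth_mem)
  have vinj: "i = i'" if "i < m" "i' < m" "v i = v i'" for i i'
    using that vnth d by (metis length_vs m_def nth_eq_iff_index_eq)
  have Gv: "G' = v ` {..<m}"
    using sv by (simp add: vs_map v_def m_def atLeast0LessThan)
  have vSuc: "v (Suc i) = v i + ts ! i" if "i < m" for i
    using that by (simp add: v_def m_def take_Suc_conv_app_nth)
  have vm: "v m = 0" using s0 by (simp add: v_def m_def)
  have v0: "v 0 = 0" by (simp add: v_def)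
  have tsS': "ts ! i \<in> S'" if "i < m" for i
    using that st m_def nth_mem by blast
  have tG: "t \<in> G'" if "t \<in> S'" for t
    using that by (simp add: G'_def group_closure.base)
  have ex0: "\<exists>n>0. nmul n s = 0"
  proof -
    have "\<not> inj (\<lambda>n::nat. nmul n s)"
    proof
      assume "inj (\<lambda>n::nat. nmul n s)"
      moreover have "finite (range (\<lambda>n::nat. nmul n s))" by simp
      ultimately have "finite (UNIV :: nat set)" using finite_imageD by blast
      then show False by simp
    qed
    then obtain a b where ab: "a \<noteq> b" "nmul a s = nmul b s" unfolding inj_def by blast
    show ?thesis
    proof (cases "a < b")
      case True
      then have "nmul b s = nmul (b-a) s + nmul a s" using nmul_add[of "b-a" a s] by simp
      then show ?thesis using ab True by (intro exI[of _ "b-a"]) simp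
    next
      case False
      then have "b < a" using ab by simp
      then have "nmul a s = nmul (a-b) s + nmul b s" using nmul_add[of "a-b" b s] by simp
      then show ?thesis using ab \<open>b < a\<close> by (intro exI[of _ "a-b"]) simp
    qed
  qed
  define k where "k = (LEAST k. 0 < k \<and> nmul k s \<in> G')"
  have kex: "\<exists>k. 0 < k \<and> nmul k s \<in> G'" using ex0 by (auto simp: G'_def)
  have kpos: "0 < k" and kG: "nmul k s \<in> G'"
    using LeastI_ex[OF kex] by (simp_all add: k_def)
  have kmin: "nmul j s \<notin> G'" if "0 < j" "j < k" for j
    using that not_less_Least[of j "\<lambda>k. 0 < k \<and> nmul k s \<in> G'"] by (auto simp: k_def)
  have K: "j = j'" if "j < k" "j' < k" "nmul j s - nmul j' s \<in> G'" for j j'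
  proof (rule ccontr)
    assume "j \<noteq> j'"
    then consider "j' < j" | "j < j'" by linarith
    then show False
    proof cases
      case 1
      then have "nmul (j - j') s \<in> G'" using that nmul_diff[of j' j s] by simp
      then show False using kmin[of "j-j'"] 1 that by simp
    next
      case 2
      have "nmul j' s - nmul j s \<in> G'" using that(3)
        by (metis G'_def group_closure_minus_iff minus_diff_eq)
      then have "nmul (j' - j) s \<in> G'" using 2 nmul_diff[of j j' s] by simp
      then show False using kmin[of "j'-j"] 2 that by simp
    qed
  qed
  define r where "r = k - 1"
  have kr: "k = Suc r" using kpos by (simp add: r_def)
  define W where "W = {x. \<exists>y\<in>G'. \<exists>j<k. x = y + nmul j s}"
  have Gadd: "a + b \<in> G'" if "a \<in> G'" "b \<in> G'" for a b
    using that by (simp add: G'_def group_closure_add)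
  have Gdiff: "a - b \<in> G'" if "a \<in> G'" "b \<in> G'" for a b
    using that by (simp add: G'_def group_closure.diff)
  have Gneg: "- a \<in> G'" if "a \<in> G'" for a
    using that by (simp add: G'_def)
  have plus_s: "w + s \<in> W" if wW: "w \<in> W" for w
  proof -
    obtain y j where yj: "y \<in> G'" "j < k" "w = y + nmul j s" using wW W_def by blast
    show ?thesis
    proof (cases "Suc j < k")
      case True
      then show ?thesis using yj unfolding W_def by (auto intro!: bexI[of _ y] exI[of _ "Suc j"] simp: add_ac)
    next
      case False
      then have "Suc j = k" using yj by simp
      then have "w + s = (y + nmul k s) + nmul 0 s" using yj by (auto simp: add_ac)
      then show ?thesis unfolding W_def using Gadd[OF yj(1) kG] kpos by blast
    qed
  qed
  have minus_s: "w - s \<in> W" if wW: "w \<in> W" for w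
  proof -
    obtain y j where yj: "y \<in> G'" "j < k" "w = y + nmul j s" using wW W_def by blast
    show ?thesis
    proof (cases j)
      case (Suc j')
      then have "w - s = y + nmul j' s" using yj by (simp add: algebra_simps)
      then show ?thesis unfolding W_def using yj Suc by (intro CollectI bexI[of _ y] exI[of _ j']) auto
    next
      case 0
      have "nmul k s = s + nmul r s" using kr by simp
      then have "w - s = (y - nmul k s) + nmul r s" using yj 0 by (simp add: algebra_simps)
      then show ?thesis unfolding W_def using Gdiff[OF yj(1) kG] kr by blast
    qed
  qed
  have plus_G: "w + t \<in> W" if wW: "w \<in> W" and tG': "t \<in> G'" for w t
  proof -
    obtain y j where yj: "y \<in> G'" "j < k" "w = y + nmul j s" using wW W_def by blast
    then have "w + t = (y + t) + nmul j s" by (simp add: add_ac)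
    then show ?thesis unfolding W_def using Gadd[OF yj(1) tG'] yj by blast
  qed
  have cl: "\<forall>w\<in>W. w + g \<in> W \<and> w - g \<in> W" if "g \<in> group_closure S" for g
    using that
  proof (induct rule: group_closure.induct)
    case (base g)
    show ?case
    proof (intro ballI)
      fix w assume w: "w \<in> W"
      show "w + g \<in> W \<and> w - g \<in> W"
      proof (cases "g = 0 \<or> g = s \<or> g = -s")
        case True
        then show ?thesis using w plus_s minus_s by auto
      next
        case False
        then have "g \<in> S'" using base by (auto simp: S'_def)
        then have "g \<in> G'" "-g \<in> G'" using tG Gneg by auto
        then show ?thesis using plus_G[OF w] by (metis diff_conv_add_uminus)
      qed
    qed
  next
    case (diff g h)
    show ?case
    proof (intro ballI)
      fix w assume w: "w \<in> W"
      have "w + (g - h) = (w + g) - h" "w - (g - h) = (w - g) + h" by (simp_all add: algebra_simps)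
      then show "w + (g - h) \<in> W \<and> w - (g - h) \<in> W" using diff w by metis
    qed
  qed
  have WU: "W = UNIV"
  proof -
    have "0 \<in> W" unfolding W_def using kpos by (auto intro!: bexI[of _ 0] exI[of _ 0] simp: G'_def)
    then have "0 + x \<in> W" for x using cl[of x] gen by blast
    then show ?thesis by auto
  qed
  define blk where "blk i = (if even i then replicate r s else replicate r (-s)) @ [ts!i]" for i
  define base where "base n = v n + (if odd n then nmul r s else 0)" for n
  define B where "B i = (\<lambda>j. v i + nmul j s) ` {..<k}" for i
  define col where "col w = wff w (replicate r s)" for w
  define QQ where "QQ i = (\<Sum>j<r. Qf s (v i + nmul j s) (ts!i))" for i
  define Corr where "Corr n = (\<Sum>i<n. if even i then QQ i else 0)" for n
  define Zp where "Zp n = concat (map blk [0..<n])" for n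
  have bsum: "base n + sum_list (blk n) = base (Suc n)" if "n < m" for n
    using that vSuc[OF that]
    by (auto simp: base_def blk_def sum_replicate nmul_neg add_ac)
  have blen: "length (blk n) = k" for n by (simp add: blk_def kr)
  have bset: "set (blk n) \<subseteq> S" if "n < m" for n
    using tsS'[OF that] sS msS by (auto simp: blk_def S'_def)
  have bvs: "distinct (vs (base n) (blk n)) \<and> set (vs (base n) (blk n)) = B n" if "n < m" for n
  proof (cases "even n")
    case True
    then have e: "vs (base n) (blk n) = map (\<lambda>j. v n + nmul j s) [0..<k]"
      by (simp add: blk_def base_def vs_blk kr del: upt_Suc)
    have "inj_on (\<lambda>j. v n + nmul j s) {0..<k}"
      by (rule inj_onI) (rule K, auto simp: G'_def)
    then show ?thesis unfolding e B_def by (simp add: distinct_map atLeast0LessThan)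
  next
    case False
    then have e0: "vs (base n) (blk n) = map (\<lambda>j. v n + nmul r s + nmul j (-s)) [0..<k]"
      by (simp add: blk_def base_def vs_blk kr del: upt_Suc)
    have "map (\<lambda>j. v n + nmul r s + nmul j (-s)) [0..<k] = map (\<lambda>j. v n + nmul (r - j) s) [0..<k]"
    proof (rule map_cong[OF refl])
      fix j assume "j \<in> set [0..<k]"
      then have "j \<le> r" using kr by auto
      then show "v n + nmul r s + nmul j (-s) = v n + nmul (r - j) s"
        using nmul_diff[of j r s] by (simp add: nmul_neg algebra_simps)
    qed
    then have e: "vs (base n) (blk n) = map (\<lambda>j. v n + nmul (r - j) s) [0..<k]" using e0 by simp
    have "inj_on (\<lambda>j. v n + nmul (r - j) s) {0..<k}"
    proof (rule inj_onI)
      fix j j' assume "j \<in> {0..<k}" "j' \<in> {0..<k}" "v n + nmul (r - j) s = v n + nmul (r - j') s"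
      then have "r - j = r - j'" using K[of "r-j" "r-j'"] kr by (auto simp: G'_def)
      then show "j = j'" using \<open>j \<in> {0..<k}\<close> \<open>j' \<in> {0..<k}\<close> kr by auto
    qed
    moreover have "(\<lambda>j. v n + nmul (r - j) s) ` {0..<k} = B n"
    proof
      show "(\<lambda>j. v n + nmul (r - j) s) ` {0..<k} \<subseteq> B n" unfolding B_def using kr by auto
      show "B n \<subseteq> (\<lambda>j. v n + nmul (r - j) s) ` {0..<k}"
      proof
        fix x assume "x \<in> B n"
        then obtain j where "j < k" "x = v n + nmul j s" unfolding B_def by auto
        then show "x \<in> (\<lambda>j. v n + nmul (r - j) s) ` {0..<k}"
          using kr by (intro image_eqI[of _ _ "r - j"]) auto
      qed
    qed
    ultimately show ?thesis unfolding e by (simp add: distinct_map)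
  qed
  have bflow: "wff (base n) (blk n) = ee (v n) (ts!n) + (if even n then QQ n else 0)
      + (if odd (Suc n) then col (v (Suc n)) else 0) - (if odd n then col (v n) else 0)" if "n < m" for n
  proof (cases "even n")
    case True
    have 1: "wff (base n) (blk n) = col (v n) + ee (v n + nmul r s) (ts!n)"
      using True by (simp add: base_def blk_def col_def wff_append wff_Cons wff_Nil sum_replicate)
    have 2: "QQ n = col (v n) - col (v n + ts!n) + ee (v n + nmul r s) (ts!n) - ee (v n) (ts!n)"
      unfolding QQ_def col_def by (rule QQ)
    show ?thesis unfolding 1 2 using True vSuc[OF that] by (simp add: fun_eq_iff)
  next
    case False
    have rr: "replicate r (-s) = rev (map uminus (replicate r s))" by simp
    have 3: "wff (v n + nmul r s) (replicate r (-s)) = - col (v n)"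
      unfolding rr col_def using wff_rev[of "v n" "replicate r s"] by (simp add: sum_replicate)
    have 1: "wff (base n) (blk n) = - col (v n) + ee (v n) (ts!n)"
      using False 3 by (simp add: base_def blk_def wff_append wff_Cons wff_Nil sum_replicate nmul_neg)
    show ?thesis unfolding 1 using False by (simp add: fun_eq_iff)
  qed
  have Bdisj: "B i \<inter> B i' = {}" if "i < m" "i' < m" "i \<noteq> i'" for i i'
  proof -
    { fix x assume "x \<in> B i" "x \<in> B i'"
      then obtain j j' where jj: "j < k" "j' < k" "x = v i + nmul j s" "x = v i' + nmul j' s"
        unfolding B_def by auto
      then have "nmul j s - nmul j' s = v i' - v i" by (simp add: algebra_simps)
      then have "nmul j s - nmul j' s \<in> G'" using Gdiff vG that by simp
      then have "j = j'" using K jj by simp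
      then have "v i = v i'" using jj by simp
      then have False using vinj that by blast }
    then show ?thesis by blast
  qed
  have ind: "sum_list (Zp n) = base n \<and> length (Zp n) = n * k \<and> set (Zp n) \<subseteq> S \<and>
      distinct (vs 0 (Zp n)) \<and> set (vs 0 (Zp n)) = (\<Union>i<n. B i) \<and>
      wff 0 (Zp n) = wff 0 (take n ts) + Corr n + (if odd n then col (v n) else 0)" if "n \<le> m" for n
    using that
  proof (induct n)
    case 0
    then show ?case by (simp add: Zp_def base_def v0 Corr_def wff_Nil)
  next
    case (Suc n)
    then have nm: "n < m" by simp
    have IH: "sum_list (Zp n) = base n" "length (Zp n) = n * k" "set (Zp n) \<subseteq> S"
      "distinct (vs 0 (Zp n))" "set (vs 0 (Zp n)) = (\<Union>i<n. B i)"
      "wff 0 (Zp n) = wff 0 (take n ts) + Corr n + (if odd n then col (v n) else 0)"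
      using Suc(1)[OF less_imp_le[OF nm]] by blast+
    have Z: "Zp (Suc n) = Zp n @ blk n" by (simp add: Zp_def)
    have V: "vs 0 (Zp (Suc n)) = vs 0 (Zp n) @ vs (base n) (blk n)"
      unfolding Z vs_append IH(1) by simp
    have dj: "set (vs 0 (Zp n)) \<inter> B n = {}" unfolding IH(5)
    proof (intro equals0I)
      fix x assume "x \<in> (\<Union>i<n. B i) \<inter> B n"
      then obtain i where "i < n" "x \<in> B i" "x \<in> B n" by auto
      then show False using Bdisj[of i n] nm by auto
    qed
    have T: "take (Suc n) ts = take n ts @ [ts!n]" using nm by (simp add: m_def take_Suc_conv_app_nth)
    have TF: "wff 0 (take (Suc n) ts) = wff 0 (take n ts) + ee (v n) (ts!n)"
      unfolding T by (simp add: wff_append wff_Cons wff_Nil v_def)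
    have CS: "Corr (Suc n) = Corr n + (if even n then QQ n else 0)" by (simp add: Corr_def)
    have F: "wff 0 (Zp (Suc n)) = wff 0 (Zp n) + wff (base n) (blk n)"
      unfolding Z wff_append IH(1) by simp
    have "wff 0 (Zp (Suc n)) = wff 0 (take (Suc n) ts) + Corr (Suc n) + (if odd (Suc n) then col (v (Suc n)) else 0)"
      unfolding F IH(6) bflow[OF nm] TF CS by (cases "even n") (simp_all add: fun_eq_iff)
    moreover have "sum_list (Zp (Suc n)) = base (Suc n)" using bsum[OF nm] IH(1) Z by simp
    moreover have "length (Zp (Suc n)) = Suc n * k" using IH(2) Z blen by simp
    moreover have "set (Zp (Suc n)) \<subseteq> S" using IH(3) Z bset[OF nm] by simp
    moreover have "distinct (vs 0 (Zp (Suc n)))" using V IH(4) bvs[OF nm] dj by simp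
    moreover have "set (vs 0 (Zp (Suc n))) = (\<Union>i<Suc n. B i)"
      using V IH(5) bvs[OF nm] by (simp add: lessThan_Suc Un_commute)
    ultimately show ?case by blast
  qed
  define Z where "Z = Zp m"
  have I: "sum_list Z = base m" "length Z = m * k" "set Z \<subseteq> S" "distinct (vs 0 Z)"
    "set (vs 0 Z) = (\<Union>i<m. B i)" "wff 0 Z = wff 0 (take m ts) + Corr m + (if odd m then col (v m) else 0)"
    using ind[of m] unfolding Z_def by blast+
  have evm: "even m" using ev m_def by simp
  have "(\<Union>i<m. B i) = W"
    unfolding W_def B_def Gv by auto
  then have su: "set (vs 0 Z) = UNIV" using I(5) WU by simp
  have "m * k \<ge> 3" using l3 kpos by (metis dual_order.trans le_add1 mult.commute mult_le_mono1 mult_0 not_gr0 One_nat_def Suc_leI mult_Suc)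
  then have hZ: "ham_cycle UNIV S Z"
    using I(1-4) su evm vm by (simp add: ham_cycle_def walk_vertices_vs base_def)
  have "walk_flow Z - walk_flow ts = Corr m"
    using I(6) evm by (simp add: walk_flow_def m_def)
  moreover have "Corr m \<in> group_closure {Qf s w t | w t. t \<in> S - {s,-s}}"
    unfolding Corr_def
  proof (rule gc_sum)
    fix i assume "i \<in> {..<m}"
    then have "ts ! i \<in> S - {s,-s}" using tsS' S'_def by simp
    then show "(if even i then QQ i else 0) \<in> group_closure {Qf s w t | w t. t \<in> S - {s,-s}}"
    proof (cases "even i")
      case True
      have "QQ i \<in> group_closure {Qf s w t | w t. t \<in> S - {s,-s}}"
        unfolding QQ_def
      proof (rule gc_sum)
        fix j show "Qf s (v i + nmul j s) (ts ! i) \<in> group_closure {Qf s w t | w t. t \<in> S - {s,-s}}"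
          using \<open>ts ! i \<in> S - {s,-s}\<close> by (blast intro: group_closure.base)
      qed simp
      then show ?thesis using True by simp
    qed simp
  qed simp
  ultimately show ?thesis using hZ by auto
qed



lemma gc_sub: "A \<subseteq> group_closure B \<Longrightarrow> group_closure A \<subseteq> group_closure B"
proof
  fix x assume A: "A \<subseteq> group_closure B" and "x \<in> group_closure A"
  from this(2) show "x \<in> group_closure B"
  proof (induct rule: group_closure.induct)
    case (base x) then show ?case using A by auto
  next
    case (diff x y) then show ?case by (blast intro: group_closure.diff)
  qed
qed

lemma gc_double: "x \<in> group_closure A \<Longrightarrow> x + x \<in> group_closure ((\<lambda>f. f + f) ` A)"
proof (induct rule: group_closure.induct)
  case (base x)
  then show ?case by (auto intro: group_closure.base)
next
  case (diff x y)
  have "(x - y) + (x - y) = (x + x) - (y + y)" by (simp add: algebra_simps)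
  then show ?case using diff by (metis group_closure.diff)
qed

lemma Qf_tr: "Qf s w t = tr w (walk_flow [s, t, -s, -t])"
  using wff_shift[of w 0 "[s, t, -s, -t]"] by (simp add: Qf_def walk_flow_def)

theorem lemma5p9:
  fixes S :: "'a::{ab_group_add, finite} set" and s :: 'a
  assumes even_order: "even (card (UNIV :: 'a set))"
    and sym: "\<And>a. a \<in> S \<Longrightarrow> - a \<in> S"
    and gen: "group_closure S = UNIV"
    and sS: "s \<in> S"
    and G'_card: "card (group_closure (S - {s, - s})) \<ge> 4"
    and G'_even: "even (card (group_closure (S - {s, - s})))"
  shows "((\<forall>t \<in> S - {s, - s}. walk_flow [s, t, - s, - t] \<in> ham_flows UNIV S)
            \<longrightarrow> ham_flows (group_closure (S - {s, - s})) (S - {s, - s}) \<subseteq> ham_flows UNIV S)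
       \<and> ((\<forall>t \<in> S - {s, - s}. (\<lambda>x a. 2 * walk_flow [s, t, - s, - t] x a) \<in> ham_flows UNIV S)
            \<longrightarrow> (\<lambda>f x a. 2 * f x a) ` ham_flows (group_closure (S - {s, - s})) (S - {s, - s})
                \<subseteq> ham_flows UNIV S)"
proof -
  define S' where "S' = S - {s, -s}"
  define G' where "G' = group_closure S'"
  define Qs where "Qs = {Qf s w t | w t. t \<in> S'}"
  define gens where "gens = {walk_flow ts |ts. ham_cycle G' S' ts}"
  have H'def: "ham_flows G' S' = group_closure gens" by (simp add: gens_def ham_flows_def)
  have msS: "-s \<in> S" using sym sS by simp
  have cons: "\<exists>Z. ham_cycle UNIV S Z \<and> walk_flow Z - walk_flow ts \<in> group_closure Qs"
    if "ham_cycle G' S' ts" for ts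
  proof -
    have "distinct (vs 0 ts)" "set (vs 0 ts) = G'"
      using that by (auto simp: ham_cycle_def walk_vertices_vs)
    then have "length ts = card G'" by (metis distinct_card length_vs)
    then have "even (length ts)" using G'_even by (simp add: G'_def S'_def)
    then show ?thesis
      using construction[OF gen sS msS, of ts] that by (simp add: Qs_def G'_def S'_def)
  qed
  have Zin: "walk_flow Z \<in> ham_flows UNIV S" if "ham_cycle UNIV S Z" for Z
    using that unfolding ham_flows_def by (blast intro: group_closure.base)
  have P1: "ham_flows G' S' \<subseteq> ham_flows UNIV S"
    if hyp: "\<forall>t \<in> S'. walk_flow [s, t, - s, - t] \<in> ham_flows UNIV S"
  proof -
    have "Qs \<subseteq> ham_flows UNIV S"
    proof
      fix g assume "g \<in> Qs"
      then obtain w t where wt: "t \<in> S'" "g = Qf s w t" unfolding Qs_def by blast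
      have "walk_flow [s, t, - s, - t] \<in> ham_flows UNIV S" using hyp wt(1) by blast
      then have "tr w (walk_flow [s, t, - s, - t]) \<in> ham_flows UNIV S" by (rule tr_H)
      then show "g \<in> ham_flows UNIV S" using wt(2) Qf_tr[of s w t] by simp
    qed
    then have QH: "group_closure Qs \<subseteq> ham_flows UNIV S"
      unfolding ham_flows_def by (rule gc_sub)
    have "gens \<subseteq> ham_flows UNIV S"
    proof
      fix f assume "f \<in> gens"
      then obtain ts where ts: "f = walk_flow ts" "ham_cycle G' S' ts" by (auto simp: gens_def)
      then obtain Z where Z: "ham_cycle UNIV S Z" "walk_flow Z - walk_flow ts \<in> group_closure Qs"
        using cons by blast
      have zz: "walk_flow Z - walk_flow ts \<in> ham_flows UNIV S" using QH Z(2) by blast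
      have "walk_flow Z - (walk_flow Z - walk_flow ts) \<in> ham_flows UNIV S"
        using Zin[OF Z(1)] zz unfolding ham_flows_def by (rule group_closure.diff)
      then show "f \<in> ham_flows UNIV S" using ts by simp
    qed
    then show ?thesis unfolding H'def unfolding ham_flows_def by (rule gc_sub)
  qed
  have P2: "(\<lambda>f x a. 2 * f x a) ` ham_flows G' S' \<subseteq> ham_flows UNIV S"
    if hyp: "\<forall>t \<in> S'. (\<lambda>x a. 2 * walk_flow [s, t, - s, - t] x a) \<in> ham_flows UNIV S"
  proof -
    have two: "(\<lambda>x a. 2 * f x a) = f + f" for f :: "'a \<Rightarrow> 'a \<Rightarrow> int" by (simp add: fun_eq_iff)
    have "(\<lambda>f. f + f) ` Qs \<subseteq> ham_flows UNIV S"
    proof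
      fix g assume "g \<in> (\<lambda>f. f + f) ` Qs"
      then obtain w t where wt: "t \<in> S'" "g = Qf s w t + Qf s w t" unfolding Qs_def by blast
      then have gtr: "g = tr w (walk_flow [s, t, -s, -t] + walk_flow [s, t, -s, -t])"
        by (simp only: Qf_tr tr_add)
      have "(\<lambda>x a. 2 * walk_flow [s, t, - s, - t] x a) \<in> ham_flows UNIV S" using hyp wt(1) by blast
      then have "walk_flow [s, t, -s, -t] + walk_flow [s, t, -s, -t] \<in> ham_flows UNIV S"
        by (simp only: two)
      then have "tr w (walk_flow [s, t, -s, -t] + walk_flow [s, t, -s, -t]) \<in> ham_flows UNIV S"
        by (rule tr_H)
      then show "g \<in> ham_flows UNIV S" using gtr by (simp only:)
    qed
    then have QH: "group_closure ((\<lambda>f. f + f) ` Qs) \<subseteq> ham_flows UNIV S"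
      unfolding ham_flows_def by (rule gc_sub)
    have "(\<lambda>f. f + f) ` gens \<subseteq> ham_flows UNIV S"
    proof
      fix g assume "g \<in> (\<lambda>f. f + f) ` gens"
      then obtain ts where ts: "g = walk_flow ts + walk_flow ts" "ham_cycle G' S' ts" by (auto simp: gens_def)
      then obtain Z where Z: "ham_cycle UNIV S Z" "walk_flow Z - walk_flow ts \<in> group_closure Qs"
        using cons by blast
      have a: "walk_flow Z + walk_flow Z \<in> ham_flows UNIV S"
        using Zin[OF Z(1)] unfolding ham_flows_def by (blast intro: group_closure_add)
      have b: "(walk_flow Z - walk_flow ts) + (walk_flow Z - walk_flow ts) \<in> ham_flows UNIV S"
        using gc_double[OF Z(2)] QH by blast
      have "g = (walk_flow Z + walk_flow Z) - ((walk_flow Z - walk_flow ts) + (walk_flow Z - walk_flow ts))"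
        using ts(1) by (simp add: algebra_simps)
      then show "g \<in> ham_flows UNIV S" using a b unfolding ham_flows_def by (simp only:) (rule group_closure.diff)
    qed
    then have GG: "group_closure ((\<lambda>f. f + f) ` gens) \<subseteq> ham_flows UNIV S"
      unfolding ham_flows_def by (rule gc_sub)
    show ?thesis
    proof
      fix g assume "g \<in> (\<lambda>f x a. 2 * f x a) ` ham_flows G' S'"
      then obtain f where f: "f \<in> group_closure gens" "g = (\<lambda>x a. 2 * f x a)" unfolding H'def by blast
      have "f + f \<in> ham_flows UNIV S" using gc_double[OF f(1)] GG by blast
      then show "g \<in> ham_flows UNIV S" using f(2) two by simp
    qed
  qed
  show ?thesis using P1 P2 by (simp add: S'_def G'_def)
qed


end
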